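(* Let $k\ge 1$ and let $P_{4k+1}$ be the path with vertices labeled $1,2,\dots,4k+1$ consecutively. Then $\tau(P_{4k+1})=k$, and for each vertex $v$, writing $v=4q+r$ with $0\le r<4$, $$TDV(v)=\begin{cases}q & \text{if } v\equiv 0 \pmod 4,\\ 0 & \text{if } v\equiv 1 \pmod 4,\\ k-q & \text{if } v\equiv 2 \pmod 4,\\ k & \text{if } v\equiv 3 \pmod 4.\end{cases}$$
   Context: A set $D \subseteq V(G)$ is a total dominating set of a graph $G$ if every vertex of $G$ has a neighbor in $D$. $\gamma_t(G)$ is the minimum cardinality of a total dominating set; a minimum one is a $\gamma_t(G)$-set. $\tau(G)$ is the number of $\gamma_t(G)$-sets and $TDV(v)$ is the number of $\gamma_t(P_{4k+1})$-sets containing $v$. *)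

theory Defs
  imports Main
begin

definition is_tds :: "'a set \<Rightarrow> ('a \<Rightarrow> 'a \<Rightarrow> bool) \<Rightarrow> 'a set \<Rightarrow> bool" where
  "is_tds V adj D \<longleftrightarrow> D \<subseteq> V \<and> (\<forall>v\<in>V. \<exists>u\<in>D. adj v u)"

definition gamma_t :: "'a set \<Rightarrow> ('a \<Rightarrow> 'a \<Rightarrow> bool) \<Rightarrow> nat" where
  "gamma_t V adj = (LEAST m. \<exists>D. is_tds V adj D \<and> card D = m)"

definition gamma_t_sets :: "'a set \<Rightarrow> ('a \<Rightarrow> 'a \<Rightarrow> bool) \<Rightarrow> 'a set set" where
  "gamma_t_sets V adj = {D. is_tds V adj D \<and> card D = gamma_t V adj}"

definition tau :: "'a set \<Rightarrow> ('a \<Rightarrow> 'a \<Rightarrow> bool) \<Rightarrow> nat" where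
  "tau V adj = card (gamma_t_sets V adj)"

definition TDV :: "'a set \<Rightarrow> ('a \<Rightarrow> 'a \<Rightarrow> bool) \<Rightarrow> 'a \<Rightarrow> nat" where
  "TDV V adj v = card {D \<in> gamma_t_sets V adj. v \<in> D}"

definition path_V :: "nat \<Rightarrow> nat set" where
  "path_V n = {1..n}"

definition path_adj :: "nat \<Rightarrow> nat \<Rightarrow> nat \<Rightarrow> bool" where
  "path_adj n u v \<longleftrightarrow> u \<in> {1..n} \<and> v \<in> {1..n} \<and> (v = u + 1 \<or> u = v + 1)"

end

theory Submission imports Defs begin

lemma tds_path: "is_tds {1..n} (path_adj n) D \<longleftrightarrow> D \<subseteq> {1..n} \<and> (\<forall>v\<in>{1..n}. v - 1 \<in> D \<or> v + 1 \<in> D)"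
proof
  assume h: "is_tds {1..n} (path_adj n) D"
  hence sub: "D \<subseteq> {1..n}" by (simp add: is_tds_def)
  have "v - 1 \<in> D \<or> v + 1 \<in> D" if vV: "v \<in> {1..n}" for v
  proof -
    have all: "\<forall>v\<in>{1..n}. \<exists>u\<in>D. path_adj n v u" using h unfolding is_tds_def by (rule conjunct2)
    obtain u where u: "u \<in> D" "path_adj n v u" using bspec[OF all vV] by (elim bexE)
    have "u = v + 1 \<or> v = u + 1" using u(2) unfolding path_adj_def by (elim conjE)
    thus ?thesis
    proof (elim disjE)
      assume "u = v + 1" thus ?thesis using u(1) by (intro disjI2) simp
    next
      assume "v = u + 1" hence "u = v - 1" by arith
      thus ?thesis using u(1) by (intro disjI1) simp
    qed
  qed
  thus "D \<subseteq> {1..n} \<and> (\<forall>v\<in>{1..n}. v - 1 \<in> D \<or> v + 1 \<in> D)" using sub by blast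
next
  assume h: "D \<subseteq> {1..n} \<and> (\<forall>v\<in>{1..n}. v - 1 \<in> D \<or> v + 1 \<in> D)"
  have "\<exists>u\<in>D. path_adj n v u" if v: "v \<in> {1..n}" for v
  proof (cases "v - 1 \<in> D")
    case True
    hence u: "v - 1 \<in> {1..n}" using h by blast
    hence "1 \<le> v - 1" by simp
    hence e: "v = (v - 1) + 1" by arith
    have "path_adj n v (v - 1) \<longleftrightarrow> v - 1 = v + 1 \<or> v = v - 1 + 1" using u v unfolding path_adj_def by simp
    hence "path_adj n v (v - 1)" using e by blast
    thus ?thesis using True by blast
  next
    case False
    hence D: "v + 1 \<in> D" using h v by blast
    hence "v + 1 \<in> {1..n}" using h by blast
    hence "path_adj n v (v + 1)" using v unfolding path_adj_def by simp
    thus ?thesis using D by blast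
  qed
  thus "is_tds {1..n} (path_adj n) D" using h unfolding is_tds_def by blast
qed

lemma m4[simp]: fixes q :: nat shows
  "(4*q) mod 4 = 0" "(4*q) div 4 = q"
  "Suc (4*q) mod 4 = 1" "Suc (4*q) div 4 = q"
  "Suc (Suc (4*q)) mod 4 = 2" "Suc (Suc (4*q)) div 4 = q"
  "Suc (Suc (Suc (4*q))) mod 4 = 3" "Suc (Suc (Suc (4*q))) div 4 = q"
  "(4*q+1) mod 4 = 1" "(4*q+1) div 4 = q"
  "(4*q+2) mod 4 = 2" "(4*q+2) div 4 = q"
  "(4*q+3) mod 4 = 3" "(4*q+3) div 4 = q"
  by presburger+

definition Dj :: "nat \<Rightarrow> nat \<Rightarrow> nat set" where
  "Dj k j = (\<lambda>i. 4*i+3) ` {..<k} \<union> (\<lambda>i. 4*i+2) ` {..<j} \<union> (\<lambda>i. 4*i) ` {j..k}"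

lemma mem_Dj: "x \<in> Dj k j \<longleftrightarrow> (x mod 4 = 3 \<and> x div 4 < k) \<or> (x mod 4 = 2 \<and> x div 4 < j)
   \<or> (x mod 4 = 0 \<and> j \<le> x div 4 \<and> x div 4 \<le> k)"
proof
  assume "x \<in> Dj k j" thus "(x mod 4 = 3 \<and> x div 4 < k) \<or> (x mod 4 = 2 \<and> x div 4 < j)
   \<or> (x mod 4 = 0 \<and> j \<le> x div 4 \<and> x div 4 \<le> k)" unfolding Dj_def by (auto simp: mod_add_left_eq)
next
  assume h: "(x mod 4 = 3 \<and> x div 4 < k) \<or> (x mod 4 = 2 \<and> x div 4 < j)
   \<or> (x mod 4 = 0 \<and> j \<le> x div 4 \<and> x div 4 \<le> k)"
  have x: "x = 4 * (x div 4) + x mod 4" by simp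
  show "x \<in> Dj k j" using h unfolding Dj_def
  proof (elim disjE)
    assume "x mod 4 = 3 \<and> x div 4 < k"
    thus "x \<in> (\<lambda>i. 4*i+3) ` {..<k} \<union> (\<lambda>i. 4*i+2) ` {..<j} \<union> (\<lambda>i. 4*i) ` {j..k}"
      using x by (intro UnI1) (auto intro!: image_eqI[of _ _ "x div 4"])
  next
    assume "x mod 4 = 2 \<and> x div 4 < j"
    thus "x \<in> (\<lambda>i. 4*i+3) ` {..<k} \<union> (\<lambda>i. 4*i+2) ` {..<j} \<union> (\<lambda>i. 4*i) ` {j..k}"
      using x by (intro UnI1 UnI2) (auto intro!: image_eqI[of _ _ "x div 4"])
  next
    assume "x mod 4 = 0 \<and> j \<le> x div 4 \<and> x div 4 \<le> k"
    thus "x \<in> (\<lambda>i. 4*i+3) ` {..<k} \<union> (\<lambda>i. 4*i+2) ` {..<j} \<union> (\<lambda>i. 4*i) ` {j..k}"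
      using x by (intro UnI2) (auto intro!: image_eqI[of _ _ "x div 4"])
  qed
qed

lemma card_Dj: assumes "j \<le> k" shows "card (Dj k j) = 2*k+1"
proof -
  have i1: "inj_on (\<lambda>i::nat. 4*i+3) A" "inj_on (\<lambda>i::nat. 4*i+2) A" "inj_on (\<lambda>i::nat. 4*i) A" for A
    by (auto simp: inj_on_def)
  have d1: "(\<lambda>i. 4*i+3) ` {..<k} \<inter> (\<lambda>i. 4*i+2) ` {..<j} = {}"
  proof -
    have "x \<notin> (\<lambda>i. 4*i+2) ` {..<j}" if "x \<in> (\<lambda>i. 4*i+3) ` {..<k}" for x
      using that by (auto dest: arg_cong[where f="\<lambda>x. x mod 4"])
    thus ?thesis by blast
  qed
  have d2: "((\<lambda>i. 4*i+3) ` {..<k} \<union> (\<lambda>i. 4*i+2) ` {..<j}) \<inter> (\<lambda>i. 4*i) ` {j..k} = {}"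
  proof -
    have "x \<notin> (\<lambda>i. 4*i) ` {j..k}" if "x \<in> (\<lambda>i. 4*i+3) ` {..<k} \<union> (\<lambda>i. 4*i+2) ` {..<j}" for x
      using that by (auto dest: arg_cong[where f="\<lambda>x. x mod 4"])
    thus ?thesis by blast
  qed
  have "card (Dj k j) = card ((\<lambda>i. 4*i+3) ` {..<k} \<union> (\<lambda>i. 4*i+2) ` {..<j}) + card ((\<lambda>i. 4*i) ` {j..k})"
    unfolding Dj_def by (rule card_Un_disjoint) (use d2 in auto)
  also have "\<dots> = k + j + (k + 1 - j)"
    by (subst card_Un_disjoint) (use d1 in \<open>auto simp: card_image inj_on_def\<close>)
  finally show ?thesis using assms by simp
qed

lemma Dj_tds: assumes "1 \<le> j" "j \<le> k" shows "is_tds {1..4*k+1} (path_adj (4*k+1)) (Dj k j)"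
  unfolding tds_path
proof (intro conjI ballI subsetI)
  fix x assume "x \<in> Dj k j"
  hence h: "(x mod 4 = 3 \<and> x div 4 < k) \<or> (x mod 4 = 2 \<and> x div 4 < j)
   \<or> (x mod 4 = 0 \<and> j \<le> x div 4 \<and> x div 4 \<le> k)" unfolding mem_Dj .
  have x: "x = 4 * (x div 4) + x mod 4" by simp
  show "x \<in> {1..4*k+1}" using h assms
  proof (elim disjE)
    assume "x mod 4 = 3 \<and> x div 4 < k" thus ?thesis using x by (auto simp: )
  next
    assume "x mod 4 = 2 \<and> x div 4 < j" thus ?thesis using x assms by auto
  next
    assume "x mod 4 = 0 \<and> j \<le> x div 4 \<and> x div 4 \<le> k" thus ?thesis using x assms by auto
  qed
next
  fix v assume v: "v \<in> {1..4*k+1}"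
  define q where "q = v div 4"
  have x: "v = 4 * q + v mod 4" unfolding q_def by simp
  have "v mod 4 = 0 \<or> v mod 4 = 1 \<or> v mod 4 = 2 \<or> v mod 4 = 3" by arith
  thus "v - 1 \<in> Dj k j \<or> v + 1 \<in> Dj k j"
  proof (elim disjE)
    assume r: "v mod 4 = 0"
    hence "q \<ge> 1" "q \<le> k" using x v by auto
    hence "v - 1 = 4 * (q-1) + 3" "q - 1 < k" using x r by auto
    thus ?thesis unfolding mem_Dj by simp
  next
    assume r: "v mod 4 = 1"
    hence "q \<le> k" using x v by auto
    show ?thesis
    proof (cases "q < j")
      case True
      hence "v + 1 = 4 * q + 2" using x r by auto
      thus ?thesis using True unfolding mem_Dj by simp
    next
      case False
      hence "v - 1 = 4 * q" using x r by auto
      thus ?thesis using False \<open>q \<le> k\<close> unfolding mem_Dj by simp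
    qed
  next
    assume r: "v mod 4 = 2"
    hence "q < k" using x v by auto
    have "v + 1 = 4 * q + 3" using x r by auto
    thus ?thesis using \<open>q < k\<close> unfolding mem_Dj by simp
  next
    assume r: "v mod 4 = 3"
    hence "q < k" using x v by auto
    show ?thesis
    proof (cases "q < j")
      case True
      hence "v - 1 = 4 * q + 2" using x r by auto
      thus ?thesis using True unfolding mem_Dj by simp
    next
      case False
      hence "v + 1 = 4 * (q+1)" using x r by auto
      thus ?thesis using False \<open>q < k\<close> unfolding mem_Dj by simp
    qed
  qed
qed


lemma char:
  fixes k :: nat and D :: "nat set"
  assumes k: "k \<ge> 1" and sub: "D \<subseteq> {1..4*k+1}"
    and dom: "\<forall>v\<in>{1..4*k+1}. v - 1 \<in> D \<or> v + 1 \<in> D"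
  shows "card D \<ge> 2*k+1" and "card D = 2*k+1 \<Longrightarrow> \<exists>j. 1 \<le> j \<and> j \<le> k \<and> D = Dj k j"
proof -
  have fin: "finite D" using sub finite_subset by blast
  define S where "S i = {x\<in>D. x div 4 = i}" for i
  have finS: "finite (S i)" for i using fin unfolding S_def by auto
  have dle: "x div 4 \<le> k" if "x \<le> 4*k+1" for x using that by presburger
  have sum: "card D = (\<Sum>i\<le>k. card (S i))"
  proof -
    have "card D = (\<Sum>x\<in>D. 1)" by simp
    also have "\<dots> = (\<Sum>i\<in>{..k}. \<Sum>x\<in>{x. x\<in>D \<and> x div 4 = i}. 1)"
      by (rule sum.group[symmetric]) (use fin sub dle in auto)
    finally show ?thesis unfolding S_def by simp
  qed
  define g where "g i = (if i < k then 2 else 1::nat)" for i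
  have dv: "v - 1 \<in> D \<or> v + 1 \<in> D" if "1 \<le> v" "v \<le> 4*k+1" for v using dom that by auto
  have notin: "x \<notin> D" if "x = 0 \<or> x > 4*k+1" for x using sub that by auto
  have a: "4*i \<in> D \<or> 4*i+2 \<in> D" if "i < k" for i
  proof -
    have e: "4*i+1-1 = 4*i" "4*i+1+1 = 4*i+2" by simp_all
    have "4*i+1-1 \<in> D \<or> 4*i+1+1 \<in> D" by (rule dv) (use that in auto)
    thus ?thesis unfolding e .
  qed
  have b: "4*i+1 \<in> D \<or> 4*i+3 \<in> D" if "i<k" for i
  proof -
    have e: "4*i+2-1 = 4*i+1" "4*i+2+1 = 4*i+3" by simp_all
    have "4*i+2-1 \<in> D \<or> 4*i+2+1 \<in> D" by (rule dv) (use that in auto)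
    thus ?thesis unfolding e .
  qed
  have top: "4*k \<in> D"
  proof -
    have e: "4*k+1-1 = 4*k" "4*k+1+1 = 4*k+2" by simp_all
    have "4*k+1-1 \<in> D \<or> 4*k+1+1 \<in> D" by (rule dv) auto
    thus ?thesis unfolding e using notin[of "4*k+2"] by auto
  qed
  have ge: "g i \<le> card (S i)" if "i \<le> k" for i
  proof (cases "i < k")
    case True
    obtain x y where xy: "x \<in> D" "y \<in> D" "x \<in> {4*i, 4*i+2}" "y \<in> {4*i+1,4*i+3}"
      using a[OF True] b[OF True] by blast
    hence "{x,y} \<subseteq> S i" "x \<noteq> y" unfolding S_def by auto
    hence "card {x,y} \<le> card (S i)" using finS card_mono by blast
    thus ?thesis using True \<open>x\<noteq>y\<close> unfolding g_def by simp
  next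
    case False hence "i = k" using that by simp
    hence "4*k \<in> S i" using top unfolding S_def by simp
    hence "S i \<noteq> {}" by auto
    hence "card (S i) \<ge> 1" using finS by (simp add: Suc_le_eq card_gt_0_iff)
    thus ?thesis using False unfolding g_def by simp
  qed
  have sumg: "(\<Sum>i\<le>k. g i) = 2*k+1"
  proof -
    have "(\<Sum>i\<le>k. g i) = (\<Sum>i<k. g i) + g k" by (simp add: lessThan_Suc_atMost[symmetric])
    also have "(\<Sum>i<k. g i) = (\<Sum>i<k. 2)" by (rule sum.cong) (auto simp: g_def)
    finally show ?thesis by (simp add: g_def)
  qed
  have "(\<Sum>i\<le>k. g i) \<le> (\<Sum>i\<le>k. card (S i))" by (rule sum_mono) (use ge in auto)
  thus "card D \<ge> 2*k+1" using sum sumg by simp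
  assume eq: "card D = 2*k+1"
  have eqS: "card (S i) = g i" if "i \<le> k" for i
  proof (rule ccontr)
    assume "card (S i) \<noteq> g i"
    hence "g i < card (S i)" using ge[OF that] by simp
    hence "(\<Sum>i\<le>k. g i) < (\<Sum>i\<le>k. card (S i))"
      by (intro sum_strict_mono_ex1) (use ge that in auto)
    thus False using sum sumg eq by simp
  qed
  have three: "False" if "{x,y,z} \<subseteq> S i" "x\<noteq>y" "x\<noteq>z" "y\<noteq>z" "i < k" for x y z i
  proof -
    have "card {x,y,z} \<le> card (S i)" using that finS card_mono by blast
    thus False using that eqS[of i] by (simp add: g_def)
  qed
  have E1: "\<not> (4*i \<in> D \<and> 4*i+2 \<in> D)" if ik: "i<k" for i
  proof
    assume h: "4*i \<in> D \<and> 4*i+2 \<in> D"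
    obtain y where "y\<in>D" "y \<in> {4*i+1,4*i+3}" using b[OF ik] by blast
    hence "{4*i, 4*i+2, y} \<subseteq> S i" "4*i \<noteq> 4*i+2" "4*i \<noteq> y" "4*i+2 \<noteq> y" using h unfolding S_def by auto
    thus False using three ik by blast
  qed
  have E2: "\<not> (4*i+1 \<in> D \<and> 4*i+3 \<in> D)" if ik: "i<k" for i
  proof
    assume h: "4*i+1 \<in> D \<and> 4*i+3 \<in> D"
    obtain y where "y\<in>D" "y \<in> {4*i,4*i+2}" using a[OF ik] by blast
    hence "{4*i+1, 4*i+3, y} \<subseteq> S i" "4*i+1 \<noteq> 4*i+3" "4*i+1 \<noteq> y" "4*i+3 \<noteq> y" using h unfolding S_def by auto
    thus False using three ik by blast
  qed
  have top1: "4*k+1 \<notin> D"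
  proof
    assume "4*k+1 \<in> D"
    hence "{4*k, 4*k+1} \<subseteq> S k" using top unfolding S_def by auto
    hence "card {4*k,4*k+1} \<le> card (S k)" using finS card_mono by blast
    thus False using eqS[of k] by (simp add: g_def)
  qed
  have last: "4*(k-1)+3 \<in> D"
  proof -
    have e: "4*k - 1 = 4*(k-1)+3" using k by simp
    have "4*k-1 \<in> D \<or> 4*k+1 \<in> D" by (rule dv) (use k in auto)
    thus ?thesis unfolding e using top1 by blast
  qed
  have step: "4*(i+1)+3 \<notin> D" if "4*i+3 \<notin> D" "i+1 < k" for i
  proof -
    have e: "4*i+4-1 = 4*i+3" "4*i+4+1 = 4*(i+1)+1" by simp_all
    have "4*i+4-1 \<in> D \<or> 4*i+4+1 \<in> D" by (rule dv) (use that in auto)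
    hence "4*(i+1)+1 \<in> D" unfolding e using that(1) by blast
    thus ?thesis using E2[of "i+1"] that(2) by blast
  qed
  have iter: "4*(i+m)+3 \<notin> D" if "4*i+3 \<notin> D" "i+m < k" for i m
    using that
  proof (induction m)
    case 0 thus ?case by simp
  next
    case (Suc m)
    hence "4*(i+m)+3 \<notin> D" by simp
    from step[OF this] Suc.prems show ?case by simp
  qed
  have odd3: "4*i+3 \<in> D" if "i<k" for i
  proof (rule ccontr)
    assume "4*i+3 \<notin> D"
    from iter[OF this, of "k-1-i"] that have h: "4*(i+(k-1-i))+3 \<notin> D" by simp
    have eq: "i + (k-1-i) = k-1" using that by simp
    from h last show False unfolding eq by blast
  qed
  have odd1: "4*i+1 \<notin> D" if "i<k" for i using E2 odd3 that by blast
  have evstep: "4*(i+1) \<in> D" if "i<k" "4*i \<in> D" for i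
  proof -
    have "4*i+2 \<notin> D" using E1 that by blast
    moreover have "4*i+2 \<in> D \<or> 4*(i+1) \<in> D"
    proof -
      have e: "4*i+3-1 = 4*i+2" "4*i+3+1 = 4*(i+1)" by simp_all
      have "4*i+3-1 \<in> D \<or> 4*i+3+1 \<in> D" by (rule dv) (use that in auto)
      thus ?thesis unfolding e .
    qed
    ultimately show ?thesis by blast
  qed
  define j where "j = (LEAST i. 4*i \<in> D)"
  have j4: "4*j \<in> D" unfolding j_def by (rule LeastI[of _ k]) (rule top)
  have jk: "j \<le> k" unfolding j_def by (rule Least_le) (rule top)
  have j1: "1 \<le> j" using j4 notin[of 0] by (cases j) auto
  have below0: "4*i \<notin> D" if "i<j" for i using not_less_Least[OF that[unfolded j_def]] .
  have below: "4*i+2 \<in> D" if "i<j" for i using a[of i] below0[OF that] that jk by auto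
  have above: "4*(j+m) \<in> D" if "j+m \<le> k" for m
    using that
  proof (induction m)
    case 0 thus ?case using j4 by simp
  next
    case (Suc m)
    hence "4*(j+m) \<in> D" by simp
    from evstep[OF _ this] Suc.prems show ?case by simp
  qed
  have above': "4*i \<in> D" if "j \<le> i" "i \<le> k" for i using above[of "i-j"] that by simp
  have above2: "4*i+2 \<notin> D" if "j \<le> i" "i < k" for i using E1 above' that by auto
  show "\<exists>j. 1 \<le> j \<and> j \<le> k \<and> D = Dj k j"
  proof (intro exI conjI)
    show "D = Dj k j"
    proof (rule set_eqI)
      fix x :: nat
      define q where "q = x div 4"
      have xq: "x = 4*q + x mod 4" unfolding q_def by simp
      have memq: "x \<in> Dj k j \<longleftrightarrow> (x mod 4 = 3 \<and> q < k) \<or> (x mod 4 = 2 \<and> q < j) \<or> (x mod 4 = 0 \<and> j \<le> q \<and> q \<le> k)"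
        unfolding mem_Dj q_def ..
      have xle: "x \<le> 4*k+1" if "x \<in> D" using sub that by auto
      have "x mod 4 = 0 \<or> x mod 4 = 1 \<or> x mod 4 = 2 \<or> x mod 4 = 3" by arith
      then show "x \<in> D \<longleftrightarrow> x \<in> Dj k j"
      proof (elim disjE)
        assume r: "x mod 4 = 0"
        hence x: "x = 4*q" using xq by simp
        have "x \<in> D \<longleftrightarrow> j \<le> q \<and> q \<le> k"
        proof
          assume xD: "x \<in> D"
          have "q \<le> k" using xle[OF xD] x by simp
          moreover have "j \<le> q"
          proof (rule ccontr)
            assume "\<not> j \<le> q" hence "4*q \<notin> D" using below0[of q] by simp
            thus False using xD x by simp
          qed
          ultimately show "j \<le> q \<and> q \<le> k" by simp
        next
          assume "j \<le> q \<and> q \<le> k"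
          thus "x \<in> D" using x above'[of q] by simp
        qed
        thus ?thesis unfolding memq using r by simp
      next
        assume r: "x mod 4 = 1"
        hence x: "x = 4*q+1" using xq by simp
        have "x \<notin> D"
        proof
          assume xD: "x \<in> D"
          have "q \<le> k" using xle[OF xD] x by simp
          show False
          proof (cases "q = k")
            case True thus False using top1 xD x by simp
          next
            case False thus False using odd1[of q] \<open>q \<le> k\<close> xD x by simp
          qed
        qed
        thus ?thesis unfolding memq using r by simp
      next
        assume r: "x mod 4 = 2"
        hence x: "x = 4*q+2" using xq by simp
        have "x \<in> D \<longleftrightarrow> q < j"
        proof
          assume xD: "x \<in> D"
          have qk: "q < k" using xle[OF xD] x by simp
          show "q < j"
          proof (rule ccontr)
            assume "\<not> q < j" hence "4*q+2 \<notin> D" using above2[of q] qk by simp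
            thus False using xD x by simp
          qed
        next
          assume "q < j"
          thus "x \<in> D" using x below[of q] by simp
        qed
        moreover have "q < j \<Longrightarrow> q < k" using jk by simp
        ultimately show ?thesis unfolding memq using r by auto
      next
        assume r: "x mod 4 = 3"
        hence x: "x = 4*q+3" using xq by simp
        have "x \<in> D \<longleftrightarrow> q < k"
        proof
          assume xD: "x \<in> D"
          show "q < k" using xle[OF xD] x by simp
        next
          assume "q < k"
          thus "x \<in> D" using x odd3[of q] by simp
        qed
        thus ?thesis unfolding memq using r by simp
      qed
    qed
  qed (use j1 jk in auto)
qed


lemma Dj_inj: "inj_on (Dj k) {1..k}"
proof (rule inj_onI)
  fix a b assume a: "a \<in> {1..k}" and b: "b \<in> {1..k}" and e: "Dj k a = Dj k b"
  show "a = b"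
  proof (rule ccontr)
    assume "a \<noteq> b"
    hence "a < b \<or> b < a" by arith
    thus False
    proof
      assume "a < b"
      hence "4*a+2 \<in> Dj k b" "4*a+2 \<notin> Dj k a" unfolding mem_Dj by simp_all
      thus False using e by simp
    next
      assume "b < a"
      hence "4*b+2 \<in> Dj k a" "4*b+2 \<notin> Dj k b" unfolding mem_Dj by simp_all
      thus False using e by simp
    qed
  qed
qed

theorem proposition5p3:
  fixes k :: nat
  assumes "k \<ge> 1"
  shows "tau (path_V (4*k+1)) (path_adj (4*k+1)) = k \<and>
    (\<forall>v \<in> path_V (4*k+1).
       TDV (path_V (4*k+1)) (path_adj (4*k+1)) v =
         (if v mod 4 = 0 then v div 4
          else if v mod 4 = 1 then 0
          else if v mod 4 = 2 then k - v div 4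
          else k))"
proof -
  let ?N = "4*k+1"
  have V: "path_V ?N = {1..?N}" by (simp add: path_V_def)
  have gam: "gamma_t {1..?N} (path_adj ?N) = 2*k+1"
    unfolding gamma_t_def
  proof (rule Least_equality)
    have "is_tds {1..?N} (path_adj ?N) (Dj k 1)" by (rule Dj_tds) (use assms in auto)
    moreover have "card (Dj k 1) = 2*k+1" by (rule card_Dj) (use assms in auto)
    ultimately show "\<exists>D. is_tds {1..?N} (path_adj ?N) D \<and> card D = 2*k+1" by (intro exI conjI)
  next
    fix m assume "\<exists>D. is_tds {1..?N} (path_adj ?N) D \<and> card D = m"
    then obtain D where D: "is_tds {1..?N} (path_adj ?N) D" and c: "card D = m" by blast
    from D have sub: "D \<subseteq> {1..?N}" and dom: "\<forall>v\<in>{1..?N}. v - 1 \<in> D \<or> v + 1 \<in> D"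
      unfolding tds_path by auto
    from char(1)[OF assms sub dom] c show "2*k+1 \<le> m" by simp
  qed
  have sets: "gamma_t_sets {1..?N} (path_adj ?N) = Dj k ` {1..k}"
  proof (rule set_eqI)
    fix D
    show "D \<in> gamma_t_sets {1..?N} (path_adj ?N) \<longleftrightarrow> D \<in> Dj k ` {1..k}"
    proof
      assume "D \<in> gamma_t_sets {1..?N} (path_adj ?N)"
      hence D: "is_tds {1..?N} (path_adj ?N) D" and c: "card D = 2*k+1"
        unfolding gamma_t_sets_def gam by auto
      from D have sub: "D \<subseteq> {1..?N}" and dom: "\<forall>v\<in>{1..?N}. v - 1 \<in> D \<or> v + 1 \<in> D"
        unfolding tds_path by auto
      from char(2)[OF assms sub dom c] obtain j where "1 \<le> j" "j \<le> k" "D = Dj k j" by blast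
      thus "D \<in> Dj k ` {1..k}" by auto
    next
      assume "D \<in> Dj k ` {1..k}"
      then obtain j where j: "1 \<le> j" "j \<le> k" and D: "D = Dj k j" by auto
      have "is_tds {1..?N} (path_adj ?N) D" unfolding D by (rule Dj_tds[OF j])
      moreover have "card D = 2*k+1" unfolding D by (rule card_Dj[OF j(2)])
      ultimately show "D \<in> gamma_t_sets {1..?N} (path_adj ?N)"
        unfolding gamma_t_sets_def gam by simp
    qed
  qed
  have tauk: "tau (path_V ?N) (path_adj ?N) = k"
    unfolding tau_def V sets using card_image[OF Dj_inj[of k]] by simp
  have tdv: "TDV (path_V ?N) (path_adj ?N) v = card {j\<in>{1..k}. v \<in> Dj k j}" for v
  proof -
    have "{D \<in> Dj k ` {1..k}. v \<in> D} = Dj k ` {j\<in>{1..k}. v \<in> Dj k j}" by blast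
    moreover have "inj_on (Dj k) {j\<in>{1..k}. v \<in> Dj k j}"
      by (rule inj_on_subset[OF Dj_inj]) auto
    ultimately show ?thesis unfolding TDV_def V sets by (simp add: card_image)
  qed
  have main: "TDV (path_V ?N) (path_adj ?N) v =
         (if v mod 4 = 0 then v div 4
          else if v mod 4 = 1 then 0
          else if v mod 4 = 2 then k - v div 4
          else k)" if v: "v \<in> path_V ?N" for v
  proof -
    define q where "q = v div 4"
    have vq: "v = 4*q + v mod 4" unfolding q_def by simp
    have vle: "v \<le> 4*k+1" using v unfolding V by simp
    have memq: "v \<in> Dj k j \<longleftrightarrow> (v mod 4 = 3 \<and> q < k) \<or> (v mod 4 = 2 \<and> q < j) \<or> (v mod 4 = 0 \<and> j \<le> q \<and> q \<le> k)" for j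
      unfolding mem_Dj q_def ..
    have "v mod 4 = 0 \<or> v mod 4 = 1 \<or> v mod 4 = 2 \<or> v mod 4 = 3" by arith
    hence "card {j\<in>{1..k}. v \<in> Dj k j} = (if v mod 4 = 0 then q
          else if v mod 4 = 1 then 0
          else if v mod 4 = 2 then k - q
          else k)"
    proof (elim disjE)
      assume r: "v mod 4 = 0"
      have "q \<le> k" using vq vle r by simp
      hence "{j\<in>{1..k}. v \<in> Dj k j} = {1..q}" unfolding memq using r by auto
      thus ?thesis using r by simp
    next
      assume r: "v mod 4 = 1"
      hence "{j\<in>{1..k}. v \<in> Dj k j} = {}" unfolding memq by auto
      thus ?thesis using r by simp
    next
      assume r: "v mod 4 = 2"
      have "q < k" using vq vle r by simp
      hence "{j\<in>{1..k}. v \<in> Dj k j} = {q+1..k}" unfolding memq using r by auto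
      thus ?thesis using r by simp
    next
      assume r: "v mod 4 = 3"
      have "q < k" using vq vle r by simp
      hence "{j\<in>{1..k}. v \<in> Dj k j} = {1..k}" unfolding memq using r by auto
      thus ?thesis using r by simp
    qed
    thus ?thesis unfolding tdv q_def .
  qed
  show ?thesis using tauk main by blast
qed

end
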